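(* As $n\to\infty$, $$\sup_{1+\frac{(\log n)^2}{n}<w<2}\left|\frac{2\sqrt{w}\,(w-1)}{n}F_n(w)-1\right|\to0,$$ i.e. $F_n(w)=\frac{n}{2\sqrt w(w-1)}(1+o(1))$ uniformly for $1+\frac{(\log n)^2}{n}<w<2$.
   Context: For $w>0$ and integer $n\ge1$ let $a_n(w)=\sum_{j=0}^n w^j$, $b_n(w)=\sum_{j=1}^n jw^j$, $c_n(w)=\sum_{j=0}^n j^2w^j$, and $$F_n(w)=\frac{1}{2\sqrt{w}}\sqrt{\frac{c_n(w)}{a_n(w)}}\sqrt{\frac{a_n(w)c_n(w)-b_n(w)^2}{w\,a_n(w)^2}}.$$ $\log$ is the natural logarithm. *)

theory Defs
  imports "HOL-Analysis.Analysis"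
begin

definition a_n :: "nat \<Rightarrow> real \<Rightarrow> real" where
  "a_n n w = (\<Sum>j=0..n. w ^ j)"

definition b_n :: "nat \<Rightarrow> real \<Rightarrow> real" where
  "b_n n w = (\<Sum>j=1..n. real j * w ^ j)"

definition c_n :: "nat \<Rightarrow> real \<Rightarrow> real" where
  "c_n n w = (\<Sum>j=0..n. (real j)^2 * w ^ j)"

definition F_n :: "nat \<Rightarrow> real \<Rightarrow> real" where
  "F_n n w = 1 / (2 * sqrt w) * sqrt (c_n n w / a_n n w)
     * sqrt ((a_n n w * c_n n w - (b_n n w)^2) / (w * (a_n n w)^2))"

end

theory Submission imports Defs "HOL-Real_Asymp.Real_Asymp" begin

lemma a_closed: "(w-1) * a_n n w = w^(n+1) - 1"
  by (induction n) (simp_all add: a_n_def algebra_simps)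

lemma b_closed: "(w-1) * b_n n w = real n * w^(n+1) - a_n n w + 1"
proof (induction n)
  case 0 then show ?case by (simp add: a_n_def b_n_def)
next
  case (Suc n)
  have "b_n (Suc n) w = b_n n w + real (Suc n) * w^(Suc n)"
    by (simp add: b_n_def)
  moreover have "a_n (Suc n) w = a_n n w + w^(Suc n)" by (simp add: a_n_def)
  ultimately show ?case using Suc by (simp add: algebra_simps)
qed

lemma c_closed: "(w-1) * c_n n w = (real n)^2 * w^(n+1) - 2 * b_n n w + a_n n w - 1"
proof (induction n)
  case 0 then show ?case by (simp add: a_n_def b_n_def c_n_def)
next
  case (Suc n)
  have "b_n (Suc n) w = b_n n w + real (Suc n) * w^(Suc n)"
    by (simp add: b_n_def)
  moreover have "a_n (Suc n) w = a_n n w + w^(Suc n)" by (simp add: a_n_def)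
  moreover have "c_n (Suc n) w = c_n n w + (real (Suc n))^2 * w^(Suc n)" by (simp add: c_n_def)
  ultimately show ?case using Suc by (simp add: algebra_simps power2_eq_square)
qed

lemma var_identity:
  assumes "w \<noteq> 1"
  shows "(w-1)^2 * (a_n n w * c_n n w - (b_n n w)^2) = w * (a_n n w)^2 - (real n + 1)^2 * w^(n+1)"
proof -
  define p where "p = w - 1"
  define W where "W = w^(n+1)"
  have p: "p \<noteq> 0" using assms by (simp add: p_def)
  have a: "a_n n w = (W-1)/p" using a_closed[of w n] p by (simp add: p_def W_def field_simps)
  have b: "b_n n w = (real n * W - a_n n w + 1)/p" using b_closed[of w n] p by (simp add: p_def W_def field_simps)
  have c: "c_n n w = ((real n)^2 * W - 2 * b_n n w + a_n n w - 1)/p" using c_closed[of w n] p by (simp add: p_def W_def field_simps)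
  have w: "w = p + 1" by (simp add: p_def)
  show ?thesis unfolding c unfolding b unfolding a w[symmetric] W_def[symmetric] p_def[symmetric]
    using p by (simp add: field_simps w power2_eq_square)
qed

lemma g_lim: "((\<lambda>u::real. u^2 * exp u / (exp u - 1)^2) \<longlongrightarrow> 0) at_top"
  by real_asymp


lemma c_le: "c_n n w \<le> (real n)^2 * a_n n w" if "w > 0" for w :: real
proof -
  have "c_n n w = (\<Sum>j=0..n. (real j)^2 * w ^ j)" by (simp add: c_n_def)
  also have "\<dots> \<le> (\<Sum>j=0..n. (real n)^2 * w ^ j)"
    by (rule sum_mono) (use that in \<open>auto intro!: mult_right_mono power_mono\<close>)
  also have "\<dots> = (real n)^2 * a_n n w" by (simp add: a_n_def sum_distrib_left)
  finally show ?thesis .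
qed

lemma core:
  fixes n :: nat and w L \<delta> :: real
  assumes n: "n > 0" and w1: "1 + L / real n < w" and w2: "w < 2" and L: "L \<ge> 2"
    and d: "\<delta> \<le> 1/8"
    and g: "\<forall>u\<ge>L/2. u^2 * exp u / (exp u - 1)^2 \<le> \<delta>"
  shows "\<bar>2 * sqrt w * (w - 1) / real n * F_n n w - 1\<bar> \<le> 2 / L + 4 * \<delta>"
proof -
  define p where "p = w - 1"
  define W where "W = w^(n+1)"
  define N where "N = real n + 1"
  define a where "a = a_n n w"
  define b where "b = b_n n w"
  define c where "c = c_n n w"
  have nr: "real n > 0" using n by simp
  have Lpos: "L > 0" using L by simp
  have "L / real n > 0" using nr Lpos by simp
  hence w1': "w > 1" using w1 by simp
  have p: "p > 0" using w1' by (simp add: p_def)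
  have npL: "real n * p > L" using w1 nr by (simp add: p_def field_simps)
  have W1: "W > 1" unfolding W_def using w1' one_less_power[of w "n+1"] by simp
  have aeq: "p * a = W - 1" using a_closed[of w n] by (simp add: p_def W_def a_def)
  have apos: "a > 0" using aeq p W1 by (metis diff_gt_0_iff_gt zero_less_mult_pos)
  define u where "u = N * ln w"
  have Wexp: "W = exp u"
  proof -
    have "exp (real (n+1) * ln w) = exp (ln w)^(n+1)" by (rule exp_of_nat_mult)
    thus ?thesis using w1' by (simp add: W_def u_def N_def add.commute)
  qed
  have lnw: "ln w \<ge> p / 2"
  proof -
    have "ln (1/w) \<le> 1/w - 1" using w1' by (intro ln_le_minus_one) simp
    hence "ln w \<ge> 1 - 1/w" using w1' by (simp add: ln_div)
    moreover have "1 - 1/w \<ge> p/2"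
    proof -
      have h: "(w-1)*(2-w) \<ge> 0" using w1' w2 by simp
      hence "w*w+2 \<le> w*3" by (simp add: algebra_simps)
      thus ?thesis using w1' by (simp add: p_def field_simps)
    qed
    ultimately show ?thesis by simp
  qed
  have N0: "N \<ge> 0" by (simp add: N_def)
  have "N*p \<le> N*(2*ln w)" using lnw N0 by (intro mult_left_mono) auto
  hence Np: "N * p \<le> 2 * u" unfolding u_def by simp
  have uL: "u \<ge> L / 2"
  proof -
    have "N * p \<ge> real n * p" using p by (simp add: N_def)
    thus ?thesis using Np npL by simp
  qed
  have gu: "u^2 * W / (W - 1)^2 \<le> \<delta>" using g uL Wexp by simp
  define T where "T = N^2 * W * p^2 / (w * (W-1)^2)"
  have T0: "T \<ge> 0" unfolding T_def using p W1 w1' by simp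
  have "T \<le> N^2 * p^2 * W / (W-1)^2"
  proof -
    have "T = (N^2 * p^2 * W / (W-1)^2) / w" unfolding T_def by (simp add: field_simps)
    also have "\<dots> \<le> N^2 * p^2 * W / (W-1)^2"
    proof -
      have x0: "N^2 * p^2 * W / (W-1)^2 \<ge> 0" using W1 by simp
      have "N^2 * p^2 * W / (W-1)^2 / w \<le> N^2 * p^2 * W / (W-1)^2 / 1"
        using x0 w1' by (intro divide_left_mono) auto
      thus ?thesis by simp
    qed
    finally show ?thesis .
  qed
  also have "\<dots> \<le> 4 * u^2 * W / (W-1)^2"
  proof -
    have "(N*p)^2 \<le> (2*u)^2" using Np p N_def by (intro power_mono) auto
    thus ?thesis using W1 by (intro divide_right_mono mult_right_mono) (auto simp: power_mult_distrib)
  qed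
  also have "\<dots> \<le> 4 * \<delta>" using gu by simp
  finally have T4: "T \<le> 4 * \<delta>" .
  define Y where "Y = p^2 * (a*c - b^2) / (w * a^2)"
  have "p^2 * (a*c - b^2) = w * a^2 - N^2 * W"
    using var_identity[of w n] w1' by (simp add: p_def a_def b_def c_def N_def W_def)
  hence "Y = 1 - N^2 * W / (w * a^2)" unfolding Y_def using apos w1' by (simp add: field_simps)
  also have "N^2 * W / (w * a^2) = T"
  proof -
    show ?thesis unfolding T_def aeq[symmetric] using p apos w1' by (simp add: field_simps power2_eq_square)
  qed
  finally have YT: "Y = 1 - T" .
  have Y1: "Y \<le> 1" and Ylo: "Y \<ge> 1 - 4*\<delta>" using YT T0 T4 by auto
  have Ypos: "Y \<ge> 0" using Ylo d by simp
  have acb: "a*c - b^2 \<ge> 0"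
  proof -
    have "p^2 * (a*c - b^2) = Y * (w * a^2)" unfolding Y_def using apos w1' by simp
    hence "p^2 * (a*c - b^2) \<ge> 0" using Ypos apos w1' by simp
    thus ?thesis using p by (simp add: zero_le_mult_iff)
  qed
  have beq: "p * b = real n * W - a + 1" using b_closed[of w n] by (simp add: p_def W_def a_def b_def)
  have bge: "b \<ge> (real n - 1/p) * a"
  proof -
    have e1: "p * a * real n = (W - 1) * real n" using aeq by simp
    have "p * ((real n - 1/p) * a) = p * a * real n - a" using p by (simp add: algebra_simps)
    hence "p * b \<ge> p * ((real n - 1/p) * a)"
      using beq e1 by (simp add: algebra_simps)
    thus ?thesis using p by simp
  qed
  have invp: "1/p < real n / L" using npL p Lpos nr by (simp add: field_simps)
  define m where "m = real n * (1 - 1/L)"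
  have m_le: "m \<le> real n - 1/p" using invp Lpos by (simp add: m_def field_simps)
  have m0: "m \<ge> 0" using L nr by (simp add: m_def)
  have bm: "b \<ge> m * a" using bge m_le apos by (smt (verit) mult_right_mono)
  have ma0: "m * a \<ge> 0" using m0 apos by simp
  have "(m * a)^2 \<le> b^2" using bm ma0 by (intro power_mono) auto
  hence "m^2 * a^2 \<le> b^2" by (simp add: power_mult_distrib)
  also have "\<dots> \<le> a * c" using acb by simp
  finally have "m^2 * a * a \<le> c * a" by (simp add: power2_eq_square algebra_simps)
  hence cm: "m^2 * a \<le> c" using apos by simp
  define X where "X = c / (a * (real n)^2)"
  have X1: "X \<le> 1" using c_le[of w n] w1' apos nr by (simp add: X_def c_def a_def field_simps)
  have "X \<ge> m^2 / (real n)^2" using cm apos nr by (simp add: X_def field_simps)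
  also have "m^2 / (real n)^2 = (1 - 1/L)^2" using nr by (simp add: m_def power_mult_distrib)
  also have "(1 - 1/L)^2 \<ge> 1 - 2/L"
    using power2_diff[of 1 "1/L"] zero_le_power2[of "1/L"] by simp
  finally have Xlo: "X \<ge> 1 - 2/L" .
  have X0: "X \<ge> 0" using Xlo L by (smt (verit) divide_le_eq_1_pos)
  have E: "2 * sqrt w * (w - 1) / real n * F_n n w = sqrt X * sqrt Y"
  proof -
    have sw: "sqrt w > 0" using w1' by simp
    define s1 where "s1 = sqrt (c/a)"
    define s2 where "s2 = sqrt ((a*c - b^2) / (w * a^2))"
    have hX: "sqrt X = s1 / real n" unfolding X_def s1_def using nr
      by (simp add: real_sqrt_divide real_sqrt_mult)
    have hY: "sqrt Y = p * s2" unfolding Y_def s2_def using p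
      by (simp add: real_sqrt_mult real_sqrt_divide)
    have hF: "F_n n w = 1 / (2 * sqrt w) * s1 * s2"
      by (simp add: F_n_def a_def b_def c_def s1_def s2_def)
    have "2 * sqrt w * (w - 1) / real n * F_n n w = p * s1 * s2 / real n"
      unfolding hF p_def[symmetric] using sw by (simp add: field_simps)
    thus ?thesis unfolding hX hY by (simp add: algebra_simps)
  qed
  have sq: "sqrt z \<ge> z" if "0 \<le> z" "z \<le> 1" for z :: real
  proof -
    have "z = sqrt z * sqrt z" using that by simp
    also have "\<dots> \<le> sqrt z * 1" using that by (intro mult_left_mono) auto
    finally show ?thesis by simp
  qed
  have sX: "sqrt X \<ge> X" using X0 X1 by (rule sq)
  have sY: "sqrt Y \<ge> Y" using Ypos Y1 by (rule sq)
  have sX1: "sqrt X \<le> 1" and sY1: "sqrt Y \<le> 1" using X1 Y1 by auto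
  have "sqrt X * sqrt Y \<ge> X * Y" using sX sY X0 Ypos by (intro mult_mono) auto
  moreover have "sqrt X * sqrt Y \<le> 1" using sX1 sY1 X0 Ypos by (simp add: mult_le_one)
  moreover have "X * Y \<ge> X + Y - 1"
  proof -
    have "(1 - X) * (1 - Y) \<ge> 0" using X1 Y1 by simp
    thus ?thesis by (simp add: algebra_simps)
  qed
  ultimately show ?thesis unfolding E using Xlo Ylo by linarith
qed

theorem lemma3p7:
  shows "\<forall>\<epsilon>>0. \<forall>\<^sub>F n in sequentially.
           \<forall>w::real. 1 + (ln (real n))^2 / real n < w \<and> w < 2 \<longrightarrow>
             \<bar>2 * sqrt w * (w - 1) / real n * F_n n w - 1\<bar> \<le> \<epsilon>"
proof (intro allI impI)
  fix \<epsilon> :: real assume e: "\<epsilon> > 0"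
  define \<delta> where "\<delta> = min \<epsilon> 1 / 8"
  have d0: "\<delta> > 0" using e by (simp add: \<delta>_def)
  have d1: "\<delta> \<le> 1/8" by (simp add: \<delta>_def)
  have d2: "4 * \<delta> \<le> \<epsilon> / 2" by (simp add: \<delta>_def)
  have "\<forall>\<^sub>F u in at_top. u^2 * exp u / (exp u - 1)^2 < \<delta>"
    using order_tendstoD(2)[OF g_lim d0] .
  then obtain U where U: "\<And>u. u \<ge> U \<Longrightarrow> u^2 * exp u / (exp u - 1)^2 < \<delta>"
    by (auto simp: eventually_at_top_linorder)
  have lim: "filterlim (\<lambda>n. (ln (real n))^2) at_top sequentially" by real_asymp
  hence "\<forall>\<^sub>F n in sequentially. (ln (real n))^2 \<ge> max (max 2 (4/\<epsilon>)) (2*U)"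
    unfolding filterlim_at_top by blast
  then show "\<forall>\<^sub>F n in sequentially.
           \<forall>w::real. 1 + (ln (real n))^2 / real n < w \<and> w < 2 \<longrightarrow>
             \<bar>2 * sqrt w * (w - 1) / real n * F_n n w - 1\<bar> \<le> \<epsilon>"
  proof (rule eventually_mono)
    fix n :: nat
    assume hn: "(ln (real n))^2 \<ge> max (max 2 (4/\<epsilon>)) (2*U)"
    define L where "L = (ln (real n))^2"
    have L2: "L \<ge> 2" and L4: "L \<ge> 4/\<epsilon>" and LU: "L \<ge> 2*U" using hn by (auto simp: L_def)
    have n0: "n > 0"
    proof (rule ccontr)
      assume "\<not> n > 0" hence "n = 0" by simp
      thus False using L2 by (simp add: L_def)
    qed
    have g: "\<forall>u\<ge>L/2. u^2 * exp u / (exp u - 1)^2 \<le> \<delta>"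
      using U LU by (auto intro: less_imp_le)
    have L2e: "2 / L \<le> \<epsilon> / 2"
    proof -
      have "4 \<le> L * \<epsilon>" using L4 e by (simp add: divide_le_eq)
      thus ?thesis using L2 by (simp add: divide_le_eq field_simps)
    qed
    show "\<forall>w::real. 1 + (ln (real n))^2 / real n < w \<and> w < 2 \<longrightarrow>
             \<bar>2 * sqrt w * (w - 1) / real n * F_n n w - 1\<bar> \<le> \<epsilon>"
    proof (intro allI impI)
      fix w :: real assume hw: "1 + (ln (real n))^2 / real n < w \<and> w < 2"
      have "\<bar>2 * sqrt w * (w - 1) / real n * F_n n w - 1\<bar> \<le> 2 / L + 4 * \<delta>"
        using core[OF n0 _ _ L2 d1 g] hw by (simp add: L_def)
      thus "\<bar>2 * sqrt w * (w - 1) / real n * F_n n w - 1\<bar> \<le> \<epsilon>" using L2e d2 by linarith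
    qed
  qed
qed

end
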